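(* Let $b\in\mathbb{N}$, $b\ge1$, $n=\frac{2^b}{2}+b$, and $a:=2^b=2(n-b)$. Then there exist $a$ sequences $S_0,\dots,S_{a-1}$ of binary vectors, where $S_i=(S_{i,1},S_{i,2},\dots,S_{i,2^n/a})$ with each $S_{i,k}\in\{0,1\}^n$, such that: (1) the sets $\{S_{i,k}:1\le k\le 2^n/a\}$, $i=0,\dots,a-1$, form a partition of $\{0,1\}^n$ (in particular all $S_{i,k}$ are distinct); (2) for all $i\in\{0,\dots,a-1\}$ and all $k\in\{1,\dots,\frac{2^n}{a}-1\}$, $H(S_{i,k},S_{i,k+1})=1$; (3) for all $i,j\in\{0,\dots,a-1\}$ with $i\neq j$ and all $k\in\{1,\dots,\frac{2^n}{a}-1\}$, the coordinate in which $S_{i,k}$ and $S_{i,k+1}$ differ is different from the coordinate in which $S_{j,k}$ and $S_{j,k+1}$ differ, unless $H(S_{i,k},S_{j,k})=1$.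
   Context: $H(u,v)$ denotes the Hamming distance between binary vectors $u,v\in\{0,1\}^n$, i.e. the number of coordinates in which they differ. *)

theory Defs
  imports Main
begin

definition bin_vecs :: "nat \<Rightarrow> bool list set" where
  "bin_vecs n = {v. length v = n}"

definition hamming :: "bool list \<Rightarrow> bool list \<Rightarrow> nat" where
  "hamming u v = card {c. c < length u \<and> c < length v \<and> u ! c \<noteq> v ! c}"

text \<open>The coordinate in which u and v differ (meaningful when hamming u v = 1).\<close>
definition diff_coord :: "bool list \<Rightarrow> bool list \<Rightarrow> nat" where
  "diff_coord u v = (THE c. c < length u \<and> c < length v \<and> u ! c \<noteq> v ! c)"

end

theory Submission
  imports Defs
begin

definition Dset :: "bool list \<Rightarrow> bool list \<Rightarrow> nat set" where
  "Dset u v = {c. c < length u \<and> c < length v \<and> u ! c \<noteq> v ! c}"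

lemma Dset_single: "Dset u v = {c} \<Longrightarrow> hamming u v = 1 \<and> diff_coord u v = c"
proof -
  assume h: "Dset u v = {c}"
  have "hamming u v = card (Dset u v)" by (simp add: hamming_def Dset_def)
  moreover have "diff_coord u v = (THE c. c \<in> Dset u v)" by (simp add: diff_coord_def Dset_def)
  ultimately show ?thesis using h by simp
qed

lemma Dset_sym: "Dset u v = Dset v u"
  unfolding Dset_def by auto

lemma Dset_Cons: "Dset (x#u) (y#v) = (if x = y then {} else {0}) \<union> Suc ` Dset u v"
proof (rule set_eqI)
  fix c show "c \<in> Dset (x#u) (y#v) \<longleftrightarrow> c \<in> (if x = y then {} else {0}) \<union> Suc ` Dset u v"
    by (cases c) (auto simp: Dset_def)
qed
lemma Dset_same: "Dset u u = {}"
  unfolding Dset_def by auto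

lemma Dset_append: "length u = length u' \<Longrightarrow>
   Dset (u@v) (u'@v') = Dset u u' \<union> (\<lambda>c. c + length u) ` Dset v v'"
proof (rule set_eqI)
  fix c assume l: "length u = length u'"
  show "c \<in> Dset (u@v) (u'@v') \<longleftrightarrow> c \<in> Dset u u' \<union> (\<lambda>c. c + length u) ` Dset v v'"
  proof (cases "c < length u")
    case True then show ?thesis using l by (auto simp: Dset_def nth_append)
  next
    case False
    then obtain d where d: "c = d + length u" by (metis add.commute le_Suc_ex not_less)
    then show ?thesis using l by (auto simp: Dset_def nth_append)
  qed
qed

definition rt :: "nat \<Rightarrow> bool list \<Rightarrow> bool list" where
  "rt p u = map (\<lambda>j. u ! ((j+p) mod length u)) [0..<length u]"

lemma rt_len[simp]: "length (rt p u) = length u"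
  unfolding rt_def by simp

lemma Dset_rt: "length u = length v \<Longrightarrow>
   Dset (rt p u) (rt p v) = {j. j < length u \<and> (j+p) mod length u \<in> Dset u v}"
  unfolding Dset_def rt_def apply auto
  by (metis less_nat_zero_code mod_less_divisor not_gr_zero)+
lemma modinv: "x < (m::nat) \<Longrightarrow> y < m \<Longrightarrow> ((x + y) mod m + (m - y)) mod m = x"
proof -
  assume h: "x < m" "y < m"
  have "((x + y) mod m + (m - y)) mod m = (x + y + (m - y)) mod m" by (simp add: mod_add_left_eq)
  also have "x + y + (m - y) = x + m" using h by simp
  finally show ?thesis using h by simp
qed
lemma modinv2: "c < (m::nat) \<Longrightarrow> p < m \<Longrightarrow> ((c + (m - p)) mod m + p) mod m = c"
proof -
  assume h: "c < m" "p < m"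
  have "((c + (m - p)) mod m + p) mod m = (c + (m - p) + p) mod m" by (simp add: mod_add_left_eq)
  also have "c + (m - p) + p = c + m" using h by simp
  finally show ?thesis using h by simp
qed

fun gv :: "nat \<Rightarrow> nat \<Rightarrow> bool list" where
  "gv 0 k = []"
| "gv (Suc m) k = (if k < 2^m then False # gv m k else True # gv m (2^Suc m - 1 - k))"

lemma gv_len[simp]: "length (gv m k) = m"
  by (induction m arbitrary: k) auto

lemma gv_inj: "k < 2^m \<Longrightarrow> k' < 2^m \<Longrightarrow> gv m k = gv m k' \<Longrightarrow> k = k'"
proof (induction m arbitrary: k k')
  case 0 then show ?case by simp
next
  case (Suc m)
  show ?case
  proof (cases "k < 2^m")
    case True
    then show ?thesis using Suc by (auto split: if_splits)
  next
    case False
    then have k': "\<not> k' < 2^m" using Suc.prems by (auto split: if_splits)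
    have e: "gv m (2^Suc m - 1 - k) = gv m (2^Suc m - 1 - k')" using Suc.prems False k' by simp
    have "2^Suc m - 1 - k = 2^Suc m - 1 - k'"
      using Suc.IH[OF _ _ e] False k' Suc.prems by simp
    then show ?thesis using Suc.prems by simp
  qed
qed

lemma gv_step: "Suc k < 2^m \<Longrightarrow> \<exists>c. Dset (gv m k) (gv m (Suc k)) = {c}"
proof (induction m arbitrary: k)
  case 0 then show ?case by simp
next
  case (Suc m)
  consider "Suc k < 2^m" | "k = 2^m - 1" | "k \<ge> 2^m" by linarith
  then show ?case
  proof cases
    case 1
    then obtain c where "Dset (gv m k) (gv m (Suc k)) = {c}" using Suc.IH by blast
    then show ?thesis using 1 by (simp add: Dset_Cons)
  next
    case 2
    have "2^Suc m - 1 - Suc k = k" using 2 by simp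
    then show ?thesis using 2 by (simp add: Dset_Cons Dset_same)
  next
    case 3
    define t where "t = 2^Suc m - 2 - k"
    have t1: "Suc t < 2^m" using 3 Suc.prems unfolding t_def by simp
    have t2: "2^Suc m - 1 - k = Suc t" "2^Suc m - 1 - Suc k = t" using 3 Suc.prems unfolding t_def by simp_all
    obtain c where c: "Dset (gv m t) (gv m (Suc t)) = {c}" using Suc.IH t1 by blast
    have g1: "gv (Suc m) k = True # gv m (Suc t)" using 3 t2 by simp
    have g2: "gv (Suc m) (Suc k) = True # gv m t" using 3 t2 by simp
    have "Dset (gv m (Suc t)) (gv m t) = {c}" using c Dset_sym by metis
    then have "Dset (gv (Suc m) k) (gv (Suc m) (Suc k)) = {Suc c}" unfolding g1 g2 by (simp add: Dset_Cons)
    then show ?thesis by blast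
  qed
qed


theorem lemma1:
  fixes b n a :: nat
  assumes "b \<ge> 1" and "n = 2 ^ b div 2 + b" and "a = 2 ^ b"
  shows "\<exists>S :: nat \<Rightarrow> nat \<Rightarrow> bool list.
     (\<forall>i<a. \<forall>k\<in>{1..2 ^ n div a}. S i k \<in> bin_vecs n)
   \<and> inj_on (\<lambda>(i, k). S i k) ({..<a} \<times> {1..2 ^ n div a})
   \<and> (\<lambda>(i, k). S i k) ` ({..<a} \<times> {1..2 ^ n div a}) = bin_vecs n
   \<and> (\<forall>i<a. \<forall>k\<in>{1..2 ^ n div a - 1}. hamming (S i k) (S i (k + 1)) = 1)
   \<and> (\<forall>i<a. \<forall>j<a. \<forall>k\<in>{1..2 ^ n div a - 1}. i \<noteq> j \<longrightarrow>
        hamming (S i k) (S j k) \<noteq> 1 \<longrightarrow>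
        diff_coord (S i k) (S i (k + 1)) \<noteq> diff_coord (S j k) (S j (k + 1)))"
proof -
  define m where "m = (2::nat) ^ (b - 1)"
  have m0: "m > 0" unfolding m_def by simp
  have bm: "(2::nat) ^ b = 2 * m"
  proof -
    from assms(1) obtain b' where "b = Suc b'" by (cases b) auto
    then show ?thesis unfolding m_def by simp
  qed
  have nm: "n = m + b" using assms(2) bm by simp
  have am: "a = 2 * m" using assms(3) bm by simp
  have N: "2 ^ n div a = 2 ^ m"
    using assms(3) nm by (simp add: power_add)
  define S where "S i k = odd i # gv (b - 1) (i div 2) @ rt (i div 2) (gv m (k - 1))" for i k
  have lenS: "length (S i k) = n" for i k
    unfolding S_def using nm assms(1) by simp
  have stepS: "Dset (S i k) (S i (Suc k)) = {Suc (b - 1 + (c + (m - i div 2)) mod m)}"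
    if "Dset (gv m (k - 1)) (gv m k) = {c}" "i div 2 < m" "k \<ge> 1" for i k c
  proof -
    have c: "c < m" using that(1) unfolding Dset_def by auto
    have kk: "Suc k - 1 = k" by simp
    have "Dset (rt (i div 2) (gv m (k - 1))) (rt (i div 2) (gv m k))
        = {j. j < m \<and> (j + i div 2) mod m = c}"
      using that(1) by (simp add: Dset_rt)
    also have "\<dots> = {(c + (m - i div 2)) mod m}"
    proof (intro set_eqI iffI)
      fix j assume "j \<in> {j. j < m \<and> (j + i div 2) mod m = c}"
      then show "j \<in> {(c + (m - i div 2)) mod m}" using modinv[of j m "i div 2"] that(2) by auto
    next
      fix j assume "j \<in> {(c + (m - i div 2)) mod m}"
      then show "j \<in> {j. j < m \<and> (j + i div 2) mod m = c}" using modinv2[OF c that(2)] m0 by auto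
    qed
    finally show ?thesis unfolding S_def kk
      by (simp add: Dset_Cons Dset_append Dset_same)
  qed
  have pairS: "Dset (S i k) (S j k) = {0}" if "i div 2 = j div 2" "i \<noteq> j" for i j k
  proof -
    have "odd i \<noteq> odd j" using that by (metis dvd_mult_div_cancel odd_two_times_div_two_succ)
    then show ?thesis unfolding S_def using that(1) by (simp add: Dset_Cons Dset_append Dset_same)
  qed
  have injS: "i = i' \<and> k = k'" if h: "i < a" "1 \<le> k" "k \<le> 2 ^ n div a" "i' < a" "1 \<le> k'" "k' \<le> 2 ^ n div a"
      "S i k = S i' k'" for i k i' k'
  proof -
    have p: "i div 2 < 2 ^ (b - 1)" "i' div 2 < 2 ^ (b - 1)" using h am m_def by auto
    from h(7) have e1: "odd i = odd i'" and e2: "gv (b - 1) (i div 2) = gv (b - 1) (i' div 2)"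
      and e3: "rt (i div 2) (gv m (k - 1)) = rt (i' div 2) (gv m (k' - 1))"
      unfolding S_def by auto
    have pp: "i div 2 = i' div 2" using gv_inj[OF p e2] .
    have ii: "i = i'" using e1 pp by (metis div_mult_mod_eq mod2_eq_if)
    have "gv m (k - 1) = gv m (k' - 1)"
    proof (rule nth_equalityI)
      show "length (gv m (k - 1)) = length (gv m (k' - 1))" by simp
      fix c assume c: "c < length (gv m (k - 1))"
      define j where "j = (c + (m - i div 2)) mod m"
      have j: "j < m" unfolding j_def using m0 by simp
      have jc: "(j + i div 2) mod m = c" unfolding j_def using modinv2[of c m "i div 2"] c p(1) m_def by simp
      have "rt (i div 2) (gv m (k - 1)) ! j = rt (i div 2) (gv m (k' - 1)) ! j" using e3 pp by simp
      then show "gv m (k - 1) ! c = gv m (k' - 1) ! c" using j jc unfolding rt_def by simp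
    qed
    then have "k - 1 = k' - 1" using gv_inj[of "k - 1" m "k' - 1"] h N by simp
    then show "i = i' \<and> k = k'" using ii h by simp
  qed
  have inj: "inj_on (\<lambda>(i, k). S i k) ({..<a} \<times> {1..2 ^ n div a})"
    by (rule inj_onI) (use injS in auto)
  have fin: "finite (bin_vecs n)" unfolding bin_vecs_def
    using finite_lists_length_eq[of "UNIV :: bool set" n] by simp
  have cardB: "card (bin_vecs n) = 2 ^ n" unfolding bin_vecs_def
    using card_lists_length_eq[of "UNIV :: bool set" n] by simp
  have sub: "(\<lambda>(i, k). S i k) ` ({..<a} \<times> {1..2 ^ n div a}) \<subseteq> bin_vecs n"
    using lenS unfolding bin_vecs_def by auto
  have cardD: "card ({..<a} \<times> {1..2 ^ n div a}) = 2 ^ n"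
    using N am nm bm by (simp add: card_cartesian_product power_add)
  have img: "(\<lambda>(i, k). S i k) ` ({..<a} \<times> {1..2 ^ n div a}) = bin_vecs n"
    using card_subset_eq[OF fin sub] card_image[OF inj] cardD cardB by simp
  have gstep: "\<exists>c. Dset (gv m (k - 1)) (gv m k) = {c}" if "k \<in> {1..2 ^ n div a - 1}" for k
  proof -
    have "(0::nat) < 2^m" by simp
    then have "k < 2^m" "Suc (k - 1) = k" using that N by auto
    then show ?thesis using gv_step[of "k - 1" m] by simp
  qed
  show ?thesis
  proof (intro exI[of _ S] conjI allI impI ballI inj img)
    fix i k assume "i < a" "k \<in> {1..2 ^ n div a}"
    then show "S i k \<in> bin_vecs n" using lenS unfolding bin_vecs_def by simp
  next
    fix i k assume i: "i < a" and k: "k \<in> {1..2 ^ n div a - 1}"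
    obtain c where c: "Dset (gv m (k - 1)) (gv m k) = {c}" using gstep[OF k] by blast
    show "hamming (S i k) (S i (k + 1)) = 1"
      using Dset_single[OF stepS[OF c]] i am k by simp
  next
    fix i j k assume i: "i < a" and j: "j < a" and k: "k \<in> {1..2 ^ n div a - 1}"
      and ij: "i \<noteq> j" and h: "hamming (S i k) (S j k) \<noteq> 1"
    have pq: "i div 2 \<noteq> j div 2" using pairS[of i j k] ij h Dset_single by blast
    obtain c where c: "Dset (gv m (k - 1)) (gv m k) = {c}" using gstep[OF k] by blast
    have cm: "c < m" using c unfolding Dset_def by auto
    have ip: "i div 2 < m" "j div 2 < m" using i j am by auto
    have di: "diff_coord (S i k) (S i (k + 1)) = Suc (b - 1 + (c + (m - i div 2)) mod m)"
      using Dset_single[OF stepS[OF c ip(1)]] k by simp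
    have dj: "diff_coord (S j k) (S j (k + 1)) = Suc (b - 1 + (c + (m - j div 2)) mod m)"
      using Dset_single[OF stepS[OF c ip(2)]] k by simp
    show "diff_coord (S i k) (S i (k + 1)) \<noteq> diff_coord (S j k) (S j (k + 1))"
    proof
      assume "diff_coord (S i k) (S i (k + 1)) = diff_coord (S j k) (S j (k + 1))"
      then have "(c + (m - i div 2)) mod m = (c + (m - j div 2)) mod m" using di dj by simp
      then have E: "((c + (m - j div 2)) mod m + i div 2) mod m = ((c + (m - j div 2)) mod m + j div 2) mod m"
        using modinv2[OF cm ip(1)] modinv2[OF cm ip(2)] by simp
      define X where "X = (c + (m - j div 2)) mod m"
      have X: "X < m" unfolding X_def using m0 by simp
      have "((i div 2 + X) mod m + (m - X)) mod m = ((j div 2 + X) mod m + (m - X)) mod m"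
        using E unfolding X_def by (simp add: add.commute)
      then show False using modinv[OF ip(1) X] modinv[OF ip(2) X] pq by simp
    qed
  qed
qed

end
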